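(* Let $m\in(1,2]$ and $U\in C^3(\mathbb{R}^d)$ such that there exists $A_1\ge0$ with $\|D^kU(q)\|\le A_1(\|q\|+1)^{m-k}$ for all $q$ and $k=2,3$. Let $T\in\mathbb{N}^*$ and $\gamma\in(0,m-1)$. (a) If $m\in(1,2)$ and $h_0>0$, there exist $\kappa>0$ and $R\ge0$ such that for all $h\in(0,h_0]$, all $q_0,p_0\in\mathbb{R}^d$ with $\|p_0\|\le\|q_0\|^\gamma$ and $\|q_0\|\ge R$, and all $i,j,k\in\{1,\dots,T\}$, $$\|\Phi^{q,i}_h(q_0,p_0)-\Phi^{q,j}_h(q_0,p_0)\|\le\kappa h\|\Phi^{q,k}_h(q_0,p_0)\|^{m-1}.$$ (b) If $m=2$, there exist $h_0>0$, $\kappa>0$ and $R\ge0$ such that the same inequality holds for all $h\in(0,h_0]$, all $q_0,p_0$ with $\|p_0\|\le\|q_0\|^\gamma$ and $\|q_0\|\ge R$, and all $i,j,k\in\{1,\dots,T\}$.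
   Context: $D^kU$ is the $k$-th differential with operator norm. For $h>0$ the leapfrog map is $\Phi_h=\Psi^{(1)}_h\circ\Psi^{(2)}_h\circ\Psi^{(1)}_h$ with $\Psi^{(1)}_h(q,p)=(q,p-(h/2)\nabla U(q))$ and $\Psi^{(2)}_h(q,p)=(q+hp,p)$; $\Phi^{\circ \ell}_h$ is its $\ell$-fold composition and $\Phi^{q,\ell}_h$ the position (first $d$ coordinates) component of $\Phi^{\circ\ell}_h$. *)

theory Defs
  imports "HOL-Analysis.Analysis"
begin

text \<open>Leapfrog map Phi_h = Psi1_h o Psi2_h o Psi1_h, with Psi1_h(q,p) = (q, p - (h/2) grad U(q))
  and Psi2_h(q,p) = (q + h p, p). G is the gradient of U.\<close>

definition psi1 :: "('a::real_normed_vector \<Rightarrow> 'a) \<Rightarrow> real \<Rightarrow> 'a \<times> 'a \<Rightarrow> 'a \<times> 'a" where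
  "psi1 G h qp = (fst qp, snd qp - (h/2) *\<^sub>R G (fst qp))"

definition psi2 :: "real \<Rightarrow> 'a::real_normed_vector \<times> 'a \<Rightarrow> 'a \<times> 'a" where
  "psi2 h qp = (fst qp + h *\<^sub>R snd qp, snd qp)"

definition leapfrog :: "('a::real_normed_vector \<Rightarrow> 'a) \<Rightarrow> real \<Rightarrow> 'a \<times> 'a \<Rightarrow> 'a \<times> 'a" where
  "leapfrog G h = psi1 G h \<circ> psi2 h \<circ> psi1 G h"

definition leapfrog_q :: "('a::real_normed_vector \<Rightarrow> 'a) \<Rightarrow> real \<Rightarrow> nat \<Rightarrow> 'a \<Rightarrow> 'a \<Rightarrow> 'a" where
  "leapfrog_q G h l q p = fst ((leapfrog G h ^^ l) (q, p))"

end

theory Submission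
  imports Defs
begin

lemma G_lip_seg:
  fixes G :: "'a::real_normed_vector \<Rightarrow> 'a" and H :: "'a \<Rightarrow> 'a \<Rightarrow>\<^sub>L 'a"
  assumes D2U: "\<And>q. (G has_derivative blinfun_apply (H q)) (at q)"
    and S: "convex S" and Hb: "\<And>z. z \<in> S \<Longrightarrow> norm (H z) \<le> c"
    and x: "x \<in> S" and y: "y \<in> S"
  shows "norm (G x - G y) \<le> c * norm (x - y)"
  apply (rule differentiable_bound[OF S _ _ x y, where f'="\<lambda>z. blinfun_apply (H z)"])
  using D2U Hb by (auto intro: has_derivative_at_withinI simp: norm_blinfun.rep_eq[symmetric])

lemma G_small:
  fixes G :: "'a::real_normed_vector \<Rightarrow> 'a" and H :: "'a \<Rightarrow> 'a \<Rightarrow>\<^sub>L 'a"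
  assumes D2U: "\<And>q. (G has_derivative blinfun_apply (H q)) (at q)"
    and m: "m \<le> 2" and A1: "A1 \<ge> 0"
    and bound2: "\<And>q. norm (H q) \<le> A1 * (norm q + 1) powr (m - 2)"
    and q: "norm q \<le> 1"
  shows "norm (G q) \<le> norm (G 0) + A1"
proof -
  have "norm (G q - G 0) \<le> A1 * norm (q - 0)"
  proof (rule G_lip_seg[OF D2U, of UNIV])
    fix z :: 'a
    have "(norm z + 1) powr (m - 2) \<le> (norm z + 1) powr 0"
      using m by (intro powr_mono) auto
    moreover have "0 \<le> norm z" by simp
    hence "norm z + 1 \<noteq> 0" by linarith
    ultimately have "(norm z + 1) powr (m - 2) \<le> 1" by simp
    hence "A1 * (norm z + 1) powr (m - 2) \<le> A1 * 1" by (rule mult_left_mono[OF _ A1])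
    thus "norm (H z) \<le> A1"
      using bound2[of z] by linarith
  qed auto
  moreover have "A1 * norm q \<le> A1" using q A1 by (simp add: mult_left_le)
  ultimately show ?thesis using norm_triangle_sub[of "G q" "G 0"] by simp
qed

lemma G_half:
  fixes G :: "'a::real_normed_vector \<Rightarrow> 'a" and H :: "'a \<Rightarrow> 'a \<Rightarrow>\<^sub>L 'a"
  assumes D2U: "\<And>q. (G has_derivative blinfun_apply (H q)) (at q)"
    and m: "m \<le> 2" and A1: "A1 \<ge> 0"
    and bound2: "\<And>q. norm (H q) \<le> A1 * (norm q + 1) powr (m - 2)"
    and q: "norm q \<ge> 1"
  shows "norm (G q - G ((1/2) *\<^sub>R q)) \<le> A1 * (norm q / 2) powr (m - 1)"
proof -
  let ?c = "A1 * (norm q / 2) powr (m - 2)"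
  have "norm (G q - G ((1/2) *\<^sub>R q)) \<le> ?c * norm (q - (1/2) *\<^sub>R q)"
  proof (rule G_lip_seg[OF D2U, of "closed_segment ((1/2) *\<^sub>R q) q"])
    fix z assume "z \<in> closed_segment ((1/2) *\<^sub>R q) q"
    then obtain u where u: "0 \<le> u" "u \<le> 1" "z = (1 - u) *\<^sub>R ((1/2) *\<^sub>R q) + u *\<^sub>R q"
      by (auto simp: closed_segment_def)
    have e1: "(1 - u) *\<^sub>R ((1/2) *\<^sub>R q) + u *\<^sub>R q = ((1-u)/2 + u) *\<^sub>R q"
    proof -
      have "(1 - u) *\<^sub>R ((1/2) *\<^sub>R q) = ((1-u)/2) *\<^sub>R q" by simp
      thus ?thesis by (simp only: scaleR_left_distrib[symmetric])
    qed
    have e2: "(1-u)/2 + u = (1+u)/2" by (simp add: field_simps)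
    have "z = ((1 + u)/2) *\<^sub>R q" using u(3) e1 e2 by simp
    hence nz: "norm z = ((1 + u)/2) * norm q" using u by simp
    have "norm q / 2 \<le> norm z" using nz u by (simp add: field_simps)
    also have "norm z \<le> norm z + 1" by simp
    finally have "(norm z + 1) powr (m - 2) \<le> (norm q / 2) powr (m - 2)"
      using m q by (intro powr_mono2') auto
    hence "A1 * (norm z + 1) powr (m - 2) \<le> ?c" by (rule mult_left_mono[OF _ A1])
    thus "norm (H z) \<le> ?c" using bound2[of z] by linarith
  qed auto
  also have "norm (q - (1/2) *\<^sub>R q) = norm q / 2"
  proof -
    have "q - (1/2) *\<^sub>R q = (1/2) *\<^sub>R q"
      by (metis add_diff_cancel scaleR_cancel_left scaleR_half_double)
    thus ?thesis by simp
  qed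
  also have "?c * (norm q / 2) = A1 * (norm q / 2) powr (m - 1)"
  proof -
    have "(norm q / 2) powr (m - 2 + 1) = (norm q / 2) powr (m - 2) * (norm q / 2) powr 1"
      by (rule powr_add)
    moreover have "(norm q / 2) powr 1 = norm q / 2" by simp
    ultimately have "(norm q / 2) powr (m - 2) * (norm q / 2) = (norm q / 2) powr (m - 2 + 1)"
      by simp
    thus ?thesis by simp
  qed
  finally show ?thesis .
qed

lemma G_growth:
  fixes G :: "'a::real_normed_vector \<Rightarrow> 'a" and H :: "'a \<Rightarrow> 'a \<Rightarrow>\<^sub>L 'a"
  assumes D2U: "\<And>q. (G has_derivative blinfun_apply (H q)) (at q)"
    and m: "1 < m" "m \<le> 2" and A1: "A1 \<ge> 0"
    and bound2: "\<And>q. norm (H q) \<le> A1 * (norm q + 1) powr (m - 2)"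
  shows "\<exists>B K. B \<ge> 0 \<and> K \<ge> 0 \<and> (\<forall>q. norm (G q) \<le> B + K * norm q powr (m - 1))"
proof -
  define a :: real where "a = 2 powr (1 - m)"
  have a0: "0 < a" unfolding a_def by simp
  have a1: "a < 1" unfolding a_def using m by (intro powr_less_one) auto
  define K where "K = A1 * a / (1 - a)"
  define B where "B = norm (G 0) + A1"
  have K0: "K \<ge> 0" unfolding K_def using a0 a1 A1 by simp
  have KA: "(K + A1) * a = K" unfolding K_def using a1 by (simp add: field_simps)
  have B0: "B \<ge> 0" unfolding B_def using A1 by simp
  have small: "norm (G q) \<le> B + K * norm q powr (m - 1)" if "norm q \<le> 1" for q
  proof -
    have "norm (G q) \<le> B" unfolding B_def using G_small[OF D2U m(2) A1 bound2 that] .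
    moreover have "K * norm q powr (m - 1) \<ge> 0" using K0 by simp
    ultimately show ?thesis by linarith
  qed
  have P: "\<forall>q. norm q \<le> 2 ^ n \<longrightarrow> norm (G q) \<le> B + K * norm q powr (m - 1)" for n
  proof (induction n)
    case 0
    then show ?case using small by simp
  next
    case (Suc n)
    show ?case
    proof (intro allI impI)
      fix q :: 'a assume q: "norm q \<le> 2 ^ Suc n"
      show "norm (G q) \<le> B + K * norm q powr (m - 1)"
      proof (cases "norm q \<le> 1")
        case True then show ?thesis using small by simp
      next
        case False
        have h: "norm ((1/2) *\<^sub>R q) \<le> 2 ^ n" using q by simp
        have ih: "norm (G ((1/2) *\<^sub>R q)) \<le> B + K * (norm q / 2) powr (m - 1)"
          using Suc.IH[rule_format, OF h] by simp
        have hf: "norm (G q - G ((1/2) *\<^sub>R q)) \<le> A1 * (norm q / 2) powr (m - 1)"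
          using G_half[OF D2U m(2) A1 bound2] False by simp
        have e: "(norm q / 2) powr (m - 1) = a * norm q powr (m - 1)"
          unfolding a_def using False by (simp add: powr_divide powr_diff powr_minus_divide)
        have "norm (G q) \<le> B + (K + A1) * (norm q / 2) powr (m - 1)"
          using ih hf norm_triangle_sub[of "G q" "G ((1/2) *\<^sub>R q)"] by (simp add: distrib_right)
        also have "\<dots> = B + ((K + A1) * a) * norm q powr (m - 1)" by (simp only: e mult.assoc)
        also have "\<dots> = B + K * norm q powr (m - 1)" using KA by simp
        finally show ?thesis .
      qed
    qed
  qed
  show ?thesis
  proof (intro exI conjI allI)
    fix q :: 'a
    obtain n where "norm q < 2 ^ n" using real_arch_pow[of 2 "norm q"] by auto
    thus "norm (G q) \<le> B + K * norm q powr (m - 1)" using P[of n] by auto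
  qed (use B0 K0 in auto)
qed

lemma leapfrog_eq:
  "leapfrog G h (q, p) = (q + h *\<^sub>R (p - (h/2) *\<^sub>R G q),
     p - (h/2) *\<^sub>R G q - (h/2) *\<^sub>R G (q + h *\<^sub>R (p - (h/2) *\<^sub>R G q)))"
  by (simp add: leapfrog_def psi1_def psi2_def)

lemma core:
  fixes G :: "'a::real_normed_vector \<Rightarrow> 'a"
  assumes Gb: "\<And>x. norm x \<le> 2 * r \<Longrightarrow> norm (G x) \<le> g * M"
    and h: "0 < h" "h \<le> h1" and g: "g \<ge> 0" and M: "M \<ge> 0"
    and p0: "norm p0 \<le> M" and r: "norm q0 \<le> r"
    and small: "h * (real T * (1 + real T * h1 * g + h1 * g)) * M \<le> r / 2"
  shows "l \<le> T \<Longrightarrow> norm (snd ((leapfrog G h ^^ l) (q0, p0))) \<le> (1 + real l * h1 * g) * M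
     \<and> norm (fst ((leapfrog G h ^^ l) (q0, p0)) - q0) \<le> real l * h * (1 + real T * h1 * g + h1 * g) * M"
proof (induction l)
  case 0
  then show ?case using p0 by simp
next
  case (Suc l)
  define P where "P = 1 + real T * h1 * g"
  define X where "X = (P + h1 * g) * M"
  define q where "q = fst ((leapfrog G h ^^ l) (q0, p0))"
  define p where "p = snd ((leapfrog G h ^^ l) (q0, p0))"
  have h10: "h1 > 0" using h by simp
  have hg: "h1 * g \<ge> 0" using h10 g by simp
  have P1: "P \<ge> 1" unfolding P_def using hg by (simp add: mult.assoc)
  have X0: "X \<ge> 0" unfolding X_def using P1 hg M by simp
  have ih: "norm p \<le> (1 + real l * h1 * g) * M" "norm (q - q0) \<le> real l * h * X"
    using Suc by (auto simp: q_def p_def P_def X_def mult.assoc)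
  have st: "(leapfrog G h ^^ Suc l) (q0, p0) = leapfrog G h (q, p)"
    by (simp add: q_def p_def)
  have smallX: "real T * h * X \<le> r / 2" using small by (simp add: X_def P_def mult_ac)
  have r0: "r \<ge> 0" using r norm_ge_zero[of q0] by linarith
  have lT: "real l \<le> real T" "real (Suc l) \<le> real T" using Suc.prems by auto
  have "real l * h * X \<le> real T * h * X"
    using lT h X0 by (intro mult_right_mono) auto
  hence dq: "norm (q - q0) \<le> r / 2" using ih smallX by linarith
  have "norm q \<le> norm q0 + norm (q - q0)" using norm_triangle_sub[of q q0] by (simp add: norm_minus_commute)
  hence "norm q \<le> 2 * r" using dq r r0 by linarith
  hence Gq: "norm (G q) \<le> g * M" by (rule Gb)
  have hgM: "h * (g * M) \<le> h1 * g * M"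
  proof -
    have "h * (g * M) \<le> h1 * (g * M)" using h g M by (intro mult_right_mono) auto
    thus ?thesis by (simp add: mult.assoc)
  qed
  have hGq: "norm ((h/2) *\<^sub>R G q) \<le> h1 * g * M / 2"
  proof -
    have "norm ((h/2) *\<^sub>R G q) = h / 2 * norm (G q)" using h by simp
    also have "\<dots> \<le> h / 2 * (g * M)" using Gq h by (intro mult_left_mono) auto
    finally show ?thesis using hgM by simp
  qed
  have "real l * h1 * g \<le> real T * h1 * g" using mult_right_mono[OF lT(1) hg]
    by (simp add: mult.assoc)
  hence "(1 + real l * h1 * g) * M \<le> P * M" unfolding P_def using M by (intro mult_right_mono) auto
  hence pP: "norm p \<le> P * M" using ih by linarith
  define ph where "ph = p - (h/2) *\<^sub>R G q"
  have "norm ph \<le> norm p + norm ((h/2) *\<^sub>R G q)" unfolding ph_def by (rule norm_triangle_ineq4)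
  moreover have "h1 * g * M \<ge> 0" using mult_nonneg_nonneg[OF hg M] .
  ultimately have "norm ph \<le> P * M + h1 * g * M" using pP hGq by linarith
  hence nph: "norm ph \<le> X" unfolding X_def by (simp add: distrib_right)
  define q' where "q' = q + h *\<^sub>R ph"
  have eqq: "q' - q0 = (q - q0) + h *\<^sub>R ph" unfolding q'_def by simp
  have "norm (q' - q0) \<le> norm (q - q0) + norm (h *\<^sub>R ph)" unfolding eqq by (rule norm_triangle_ineq)
  also have "norm (h *\<^sub>R ph) = h * norm ph" using h by simp
  also have "h * norm ph \<le> h * X" using nph h by (intro mult_left_mono) auto
  finally have dq': "norm (q' - q0) \<le> real (Suc l) * h * X" using ih by (simp add: distrib_right)
  have "real (Suc l) * h * X \<le> real T * h * X"
    using lT h X0 by (intro mult_right_mono) auto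
  hence "norm (q' - q0) \<le> r / 2" using dq' smallX by linarith
  moreover have "norm q' \<le> norm q0 + norm (q' - q0)" using norm_triangle_sub[of q' q0] by (simp add: norm_minus_commute)
  ultimately have "norm q' \<le> 2 * r" using r r0 by linarith
  hence Gq': "norm (G q') \<le> g * M" by (rule Gb)
  have hGq': "norm ((h/2) *\<^sub>R G q') \<le> h1 * g * M / 2"
  proof -
    have "norm ((h/2) *\<^sub>R G q') = h / 2 * norm (G q')" using h by simp
    also have "\<dots> \<le> h / 2 * (g * M)" using Gq' h by (intro mult_left_mono) auto
    finally show ?thesis using hgM by simp
  qed
  have np': "norm (ph - (h/2) *\<^sub>R G q') \<le> (1 + real (Suc l) * h1 * g) * M"
  proof -
    have "norm (ph - (h/2) *\<^sub>R G q') \<le> norm p + norm ((h/2) *\<^sub>R G q) + norm ((h/2) *\<^sub>R G q')"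
      using norm_triangle_ineq4[of ph "(h/2) *\<^sub>R G q'"] norm_triangle_ineq4[of p "(h/2) *\<^sub>R G q"]
      unfolding ph_def by linarith
    also have "\<dots> \<le> (1 + real l * h1 * g) * M + h1 * g * M"
      using ih hGq hGq' by linarith
    also have "\<dots> = (1 + real (Suc l) * h1 * g) * M" by (simp add: algebra_simps)
    finally show ?thesis .
  qed
  have "leapfrog G h (q, p) = (q', ph - (h/2) *\<^sub>R G q')"
    by (simp add: leapfrog_eq q'_def ph_def)
  thus ?case using np' dq' st by (simp add: X_def P_def mult.assoc)
qed

lemma conclude:
  fixes G :: "'a::real_normed_vector \<Rightarrow> 'a"
  assumes Gb: "\<And>x. norm x \<le> 2 * norm q0 \<Longrightarrow> norm (G x) \<le> g * M"
    and h: "0 < h" "h \<le> hb" and g: "g \<ge> 0" and M: "M = norm q0 powr (m - 1)"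
    and m: "1 < m" "m \<le> 2" and r1: "norm q0 \<ge> 1" and p0: "norm p0 \<le> M"
    and small: "h * (real T * (1 + real T * hb * g + hb * g)) * M \<le> norm q0 / 2"
    and ijk: "i \<le> T" "j \<le> T" "k \<le> T"
  shows "norm (leapfrog_q G h i q0 p0 - leapfrog_q G h j q0 p0)
     \<le> (4 * (real T * (1 + real T * hb * g + hb * g))) * h * norm (leapfrog_q G h k q0 p0) powr (m - 1)"
proof -
  define Q where "Q = real T * (1 + real T * hb * g + hb * g)"
  define Y where "Y = 1 + real T * hb * g + hb * g"
  define r where "r = norm q0"
  have hg: "hb * g \<ge> 0" using h g by simp
  have Y0: "Y \<ge> 0" unfolding Y_def using hg by (simp add: mult.assoc)
  have M0: "M \<ge> 0" unfolding M by simp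
  have Q0: "Q \<ge> 0" unfolding Q_def using Y0 Y_def by simp
  have co: "norm (fst ((leapfrog G h ^^ l) (q0, p0)) - q0) \<le> h * Q * M" if "l \<le> T" for l
  proof -
    have "norm (fst ((leapfrog G h ^^ l) (q0, p0)) - q0) \<le> real l * h * Y * M"
      using core[OF Gb h g M0 p0 order_refl small that] unfolding Y_def by (simp add: mult.assoc)
    also have "real l * h * Y * M \<le> real T * h * Y * M"
      using that h Y0 M0 by (intro mult_right_mono) auto
    finally show ?thesis unfolding Q_def Y_def by (simp add: mult_ac)
  qed
  define D where "D = h * Q * M"
  have D0: "D \<ge> 0" unfolding D_def using h Q0 M0 by simp
  have Dr: "D \<le> r / 2" using small unfolding D_def Q_def r_def .
  let ?qi = "leapfrog_q G h i q0 p0" and ?qj = "leapfrog_q G h j q0 p0" and ?qk = "leapfrog_q G h k q0 p0"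
  have ci: "norm (?qi - q0) \<le> D" and cj: "norm (?qj - q0) \<le> D" and ck: "norm (?qk - q0) \<le> D"
    using co ijk unfolding leapfrog_q_def D_def by auto
  have "norm (?qi - ?qj) \<le> norm (?qi - q0) + norm (?qj - q0)"
    using norm_triangle_ineq4[of "?qi - q0" "?qj - q0"] by simp
  hence dij: "norm (?qi - ?qj) \<le> 2 * D" using ci cj by linarith
  have "norm q0 \<le> norm ?qk + norm (?qk - q0)"
    using norm_triangle_sub[of q0 ?qk] by (simp add: norm_minus_commute)
  hence qk: "r / 2 \<le> norm ?qk" using ck Dr unfolding r_def by linarith
  have r0: "r \<ge> 0" unfolding r_def by simp
  have a: "(r / 2) powr (m - 1) \<le> norm ?qk powr (m - 1)"
    using qk m r0 by (intro powr_mono2) auto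
  have b: "(r / 2) powr (m - 1) = M / 2 powr (m - 1)"
    unfolding M r_def by (simp add: powr_divide)
  have c2: "2 powr (m - 1) \<le> 2" using powr_mono[of "m - 1" 1 2] m by simp
  have c2p: "2 powr (m - 1) > 0" by simp
  have "M / 2 \<le> M / 2 powr (m - 1)"
    using M0 c2 c2p by (intro divide_left_mono) auto
  hence Mk: "M / 2 \<le> norm ?qk powr (m - 1)" using a b by linarith
  have "2 * D = (4 * Q * h) * (M / 2)" unfolding D_def by simp
  also have "\<dots> \<le> (4 * Q * h) * norm ?qk powr (m - 1)"
    using Mk Q0 h by (intro mult_left_mono) auto
  finally have e: "2 * D \<le> 4 * Q * h * norm ?qk powr (m - 1)" .
  show ?thesis using dij e unfolding Q_def by linarith
qed

theorem lemma13:
  fixes U :: "'a::euclidean_space \<Rightarrow> real"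
    and G :: "'a \<Rightarrow> 'a"
    and H :: "'a \<Rightarrow> 'a \<Rightarrow>\<^sub>L 'a"
    and H3 :: "'a \<Rightarrow> 'a \<Rightarrow>\<^sub>L ('a \<Rightarrow>\<^sub>L 'a)"
    and m A1 \<gamma> :: real and T :: nat
  assumes m: "1 < m" "m \<le> 2"
    and gradU: "\<And>q. (U has_derivative (\<lambda>v. G q \<bullet> v)) (at q)"
    and D2U: "\<And>q. (G has_derivative blinfun_apply (H q)) (at q)"
    and D3U: "\<And>q. (H has_derivative blinfun_apply (H3 q)) (at q)"
    and C3: "continuous_on UNIV H3"
    and A1: "A1 \<ge> 0"
    and bound2: "\<And>q. norm (H q) \<le> A1 * (norm q + 1) powr (m - 2)"
    and bound3: "\<And>q. norm (H3 q) \<le> A1 * (norm q + 1) powr (m - 3)"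
    and T: "T \<ge> 1"
    and \<gamma>: "0 < \<gamma>" "\<gamma> < m - 1"
  shows
    "(m < 2 \<longrightarrow> (\<forall>h0>0. \<exists>\<kappa>>0. \<exists>R\<ge>0. \<forall>h. 0 < h \<and> h \<le> h0 \<longrightarrow>
        (\<forall>q0 p0. norm p0 \<le> norm q0 powr \<gamma> \<and> norm q0 \<ge> R \<longrightarrow>
          (\<forall>i\<in>{1..T}. \<forall>j\<in>{1..T}. \<forall>k\<in>{1..T}.
             norm (leapfrog_q G h i q0 p0 - leapfrog_q G h j q0 p0)
               \<le> \<kappa> * h * norm (leapfrog_q G h k q0 p0) powr (m - 1)))))
   \<and> (m = 2 \<longrightarrow> (\<exists>h0>0. \<exists>\<kappa>>0. \<exists>R\<ge>0. \<forall>h. 0 < h \<and> h \<le> h0 \<longrightarrow>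
        (\<forall>q0 p0. norm p0 \<le> norm q0 powr \<gamma> \<and> norm q0 \<ge> R \<longrightarrow>
          (\<forall>i\<in>{1..T}. \<forall>j\<in>{1..T}. \<forall>k\<in>{1..T}.
             norm (leapfrog_q G h i q0 p0 - leapfrog_q G h j q0 p0)
               \<le> \<kappa> * h * norm (leapfrog_q G h k q0 p0) powr (m - 1)))))"
proof -
  obtain B K where BK: "B \<ge> 0" "K \<ge> 0" "\<And>q. norm (G q) \<le> B + K * norm q powr (m - 1)"
    using G_growth[OF D2U m A1 bound2] by blast
  define g where "g = B + 2 * K"
  have g0: "g \<ge> 0" unfolding g_def using BK by simp
  have Gb: "norm (G x) \<le> g * norm q0 powr (m - 1)"
    if r1: "norm q0 \<ge> 1" and x: "norm x \<le> 2 * norm q0" for q0 x :: 'a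
  proof -
    define M where "M = norm q0 powr (m - 1)"
    have M1: "M \<ge> 1" unfolding M_def using r1 m by (intro ge_one_powr_ge_zero) auto
    have "norm x powr (m - 1) \<le> (2 * norm q0) powr (m - 1)"
      using x m by (intro powr_mono2) auto
    also have "\<dots> = 2 powr (m - 1) * M" unfolding M_def by (simp add: powr_mult)
    also have "\<dots> \<le> 2 * M"
      using powr_mono[of "m - 1" 1 2] m M1 by (intro mult_right_mono) auto
    finally have "K * norm x powr (m - 1) \<le> K * (2 * M)" using BK(2) by (intro mult_left_mono) auto
    moreover have "B \<le> B * M" using BK(1) M1 by (simp add: mult_le_cancel_left1)
    ultimately have "norm (G x) \<le> B * M + K * (2 * M)" using BK(3)[of x] by linarith
    thus ?thesis unfolding g_def M_def by (simp add: algebra_simps)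
  qed
  have p0b: "norm p0 \<le> norm q0 powr (m - 1)"
    if "norm p0 \<le> norm q0 powr \<gamma>" "norm q0 \<ge> 1" for p0 q0 :: 'a
    using that powr_mono[of \<gamma> "m - 1" "norm q0"] \<gamma> by linarith
  have T1: "real T \<ge> 1" using T by simp
  show ?thesis
  proof (intro conjI impI)
    assume m2: "m < 2"
    show "\<forall>h0>0. \<exists>\<kappa>>0. \<exists>R\<ge>0. \<forall>h. 0 < h \<and> h \<le> h0 \<longrightarrow>
        (\<forall>q0 p0. norm p0 \<le> norm q0 powr \<gamma> \<and> norm q0 \<ge> R \<longrightarrow>
          (\<forall>i\<in>{1..T}. \<forall>j\<in>{1..T}. \<forall>k\<in>{1..T}.
             norm (leapfrog_q G h i q0 p0 - leapfrog_q G h j q0 p0)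
               \<le> \<kappa> * h * norm (leapfrog_q G h k q0 p0) powr (m - 1)))"
    proof (intro allI impI)
      fix h0 :: real assume h0: "h0 > 0"
      define Q where "Q = real T * (1 + real T * h0 * g + h0 * g)"
      have Q1: "Q \<ge> 1"
      proof -
        have "h0 * g \<ge> 0" using h0 g0 by simp
        hence "1 + real T * h0 * g + h0 * g \<ge> 1" by (simp add: mult.assoc)
        thus ?thesis unfolding Q_def using T1 by (metis mult_mono' mult_1_right order_trans zero_le_one) 
      qed
      define R where "R = max 1 ((2 * h0 * Q) powr (1 / (2 - m)))"
      show "\<exists>\<kappa>>0. \<exists>R\<ge>0. \<forall>h. 0 < h \<and> h \<le> h0 \<longrightarrow>
        (\<forall>q0 p0. norm p0 \<le> norm q0 powr \<gamma> \<and> norm q0 \<ge> R \<longrightarrow>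
          (\<forall>i\<in>{1..T}. \<forall>j\<in>{1..T}. \<forall>k\<in>{1..T}.
             norm (leapfrog_q G h i q0 p0 - leapfrog_q G h j q0 p0)
               \<le> \<kappa> * h * norm (leapfrog_q G h k q0 p0) powr (m - 1)))"
        (is "\<exists>\<kappa>>0. \<exists>R\<ge>0. ?P \<kappa> R")
      proof -
      have k0: "4 * Q > 0" using Q1 by simp
      have R0: "R \<ge> 0" unfolding R_def by simp
      have "?P (4 * Q) R"
      proof (intro allI impI ballI)
        fix h :: real and q0 p0 :: 'a and i j k :: nat
        assume hh: "0 < h \<and> h \<le> h0" and qp: "norm p0 \<le> norm q0 powr \<gamma> \<and> R \<le> norm q0"
          and ijk: "i \<in> {1..T}" "j \<in> {1..T}" "k \<in> {1..T}"
        define r where "r = norm q0"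
        have r1: "r \<ge> 1" using qp unfolding R_def r_def by simp
        have rR: "(2 * h0 * Q) powr (1 / (2 - m)) \<le> r" using qp unfolding R_def r_def by simp
        have "((2 * h0 * Q) powr (1 / (2 - m))) powr (2 - m) \<le> r powr (2 - m)"
          using rR m2 by (intro powr_mono2) auto
        moreover have "((2 * h0 * Q) powr (1 / (2 - m))) powr (2 - m) = 2 * h0 * Q"
          using m2 h0 Q1 by (simp add: powr_powr)
        ultimately have big: "2 * h0 * Q \<le> r powr (2 - m)" by simp
        have rr: "r = r powr (m - 1) * r powr (2 - m)"
        proof -
          have "r powr (m - 1 + (2 - m)) = r powr (m - 1) * r powr (2 - m)" by (rule powr_add)
          moreover have "r powr (m - 1 + (2 - m)) = r" using r1 by simp
          ultimately show ?thesis by simp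
        qed
        have M0: "r powr (m - 1) \<ge> 0" by simp
        have "h * Q * r powr (m - 1) \<le> h0 * Q * r powr (m - 1)"
          using hh Q1 M0 by (intro mult_right_mono) auto
        also have "\<dots> = r powr (m - 1) * (2 * h0 * Q) / 2" by simp
        also have "\<dots> \<le> r powr (m - 1) * r powr (2 - m) / 2"
          using big M0 by (intro divide_right_mono mult_left_mono) auto
        also have "\<dots> = r / 2" using rr by simp
        finally have small: "h * Q * r powr (m - 1) \<le> r / 2" .
        show "norm (leapfrog_q G h i q0 p0 - leapfrog_q G h j q0 p0)
               \<le> 4 * Q * h * norm (leapfrog_q G h k q0 p0) powr (m - 1)"
          unfolding Q_def
        proof (rule conclude[where g = g and M = "norm q0 powr (m - 1)"])
          show "\<And>x. norm x \<le> 2 * norm q0 \<Longrightarrow> norm (G x) \<le> g * norm q0 powr (m - 1)"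
            using Gb r1 unfolding r_def by blast
          show "norm p0 \<le> norm q0 powr (m - 1)" using p0b qp r1 unfolding r_def by blast
          show "h * (real T * (1 + real T * h0 * g + h0 * g)) * norm q0 powr (m - 1) \<le> norm q0 / 2"
            using small unfolding Q_def r_def .
        qed (use hh g0 m r1 ijk r_def in auto)
      qed
      thus ?thesis using k0 R0 by blast
      qed
    qed
  next
    assume m2: "m = 2"
    define Q where "Q = real T * (1 + real T * 1 * g + 1 * g)"
    have Q1: "Q \<ge> 1"
    proof -
      have "1 + real T * 1 * g + 1 * g \<ge> 1" using g0 by simp
      thus ?thesis unfolding Q_def using T1 by (metis mult_mono' mult_1_right order_trans zero_le_one)
    qed
    show "\<exists>h0>0. \<exists>\<kappa>>0. \<exists>R\<ge>0. \<forall>h. 0 < h \<and> h \<le> h0 \<longrightarrow>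
        (\<forall>q0 p0. norm p0 \<le> norm q0 powr \<gamma> \<and> norm q0 \<ge> R \<longrightarrow>
          (\<forall>i\<in>{1..T}. \<forall>j\<in>{1..T}. \<forall>k\<in>{1..T}.
             norm (leapfrog_q G h i q0 p0 - leapfrog_q G h j q0 p0)
               \<le> \<kappa> * h * norm (leapfrog_q G h k q0 p0) powr (m - 1)))"
      (is "\<exists>h0>0. \<exists>\<kappa>>0. \<exists>R\<ge>0. ?P h0 \<kappa> R")
    proof -
    have a0: "1 / (2 * Q) > 0" using Q1 by simp
    have k0: "4 * Q > 0" using Q1 by simp
    have "?P (1 / (2 * Q)) (4 * Q) 1"
    proof (intro allI impI ballI)
      fix h :: real and q0 p0 :: 'a and i j k :: nat
      assume hh: "0 < h \<and> h \<le> 1 / (2 * Q)" and qp: "norm p0 \<le> norm q0 powr \<gamma> \<and> 1 \<le> norm q0"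
        and ijk: "i \<in> {1..T}" "j \<in> {1..T}" "k \<in> {1..T}"
      have h1: "h \<le> 1"
      proof -
        have "1 / (2 * Q) \<le> 1" using Q1 by simp
        thus ?thesis using hh by linarith
      qed
      have M: "norm q0 powr (m - 1) = norm q0" using m2 qp by simp
      have "h * Q \<le> 1 / (2 * Q) * Q" using hh Q1 by (intro mult_right_mono) auto
      also have "\<dots> = 1 / 2" using Q1 by simp
      finally have "h * Q * norm q0 \<le> 1 / 2 * norm q0" by (intro mult_right_mono) auto
      hence small: "h * Q * norm q0 powr (m - 1) \<le> norm q0 / 2" using M by simp
      show "norm (leapfrog_q G h i q0 p0 - leapfrog_q G h j q0 p0)
               \<le> 4 * Q * h * norm (leapfrog_q G h k q0 p0) powr (m - 1)"
        unfolding Q_def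
      proof (rule conclude[where g = g and M = "norm q0 powr (m - 1)" and hb = 1])
        show "\<And>x. norm x \<le> 2 * norm q0 \<Longrightarrow> norm (G x) \<le> g * norm q0 powr (m - 1)"
          using Gb qp by blast
        show "norm p0 \<le> norm q0 powr (m - 1)" using p0b qp by blast
        show "h * (real T * (1 + real T * 1 * g + 1 * g)) * norm q0 powr (m - 1) \<le> norm q0 / 2"
          using small unfolding Q_def .
      qed (use hh h1 g0 m qp ijk in auto)
    qed
    moreover have R1: "(0::real) \<le> 1" by simp
    ultimately show ?thesis using a0 k0 by blast
    qed
  qed

qed

end
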